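(* In the ring $S$ (defined in the context), for every triple $(a,b,c)\neq(0,0,0)$ of nonnegative integers and every finite multiset $\Lambda$ of triples, we have \begin{align*} \bar m_{(a,b,c)}\bar m_{\Lambda}=&(u_{(a,b,c)}+1)\bar m_{(a,b,c)\Lambda}+\sum_{\substack{u_{(i,j,k)}>0\\ c+k\leq r-1}}(u_{(a+i,b+j,c+k)}+1)\bar m_{(a+i,b+j,c+k)\Lambda-(i,j,k)}\\ &+\sum_{\substack{u_{(i,j,k)}>0\\ c+k\geq r}}(u_{(a+i+1,b+j+1,c+k-r)}+1)\bar m_{(a+i+1,b+j+1,c+k-r)\Lambda-(i,j,k)}, \end{align*} where $u_{(i,j,k)}$ denotes the multiplicity of $(i,j,k)$ in $\Lambda$ and the sums run over the distinct triples $(i,j,k)$ occurring in $\Lambda$.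
   Context: Fix $r\geq1$. For $n\geq1$ let $R_n=\mathbb{C}[x_1,\dots,x_n,y_1,\dots,y_n,z_1,\dots,z_n]$ with $S_n$ permuting indices simultaneously, $I_n=(x_iy_i-z_i^r)_{i=1}^n$, $I_n^{S_n}=I_n\cap R_n^{S_n}$. The maps $R_{n+1}^{S_{n+1}}\to R_n^{S_n}$ set $x_{n+1}=y_{n+1}=z_{n+1}=0$; let $S'=\varprojlim R_n^{S_n}$ and $S=\varprojlim R_n^{S_n}/I_n^{S_n}$ (graded projective limits). For a finite multiset $\Lambda=(a_1,b_1,c_1)\cdots(a_l,b_l,c_l)$ of triples of nonnegative integers, none equal to $(0,0,0)$, $m_\Lambda\in S'$ is the element whose image in $R_n^{S_n}$ is the sum of all distinct monomials obtained from $x_1^{a_1}y_1^{b_1}z_1^{c_1}\cdots x_l^{a_l}y_l^{b_l}z_l^{c_l}$ by permuting indices (zero if $l>n$), and $\bar m_\Lambda$ is its image in $S$. Write $l(\Lambda)=l$, $(a,b,c)\Lambda$ for the multiset with $(a,b,c)$ added, and $\Lambda-(i,j,k)$ for the multiset with one copy of $(i,j,k)$ removed. *)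

theory Defs
  imports Complex_Main "HOL-Library.Poly_Mapping" "HOL-Library.Multiset" "HOL-Combinatorics.Permutations"
begin

(* Variables x_i, y_i, z_i (indices i = 0,1,2,...; R_n uses indices 0..n-1) *)
datatype var = X nat | Y nat | Z nat

type_synonym cpoly = "(var \<Rightarrow>\<^sub>0 nat) \<Rightarrow>\<^sub>0 complex"
type_synonym triple = "nat \<times> nat \<times> nat"

definition pvar :: "var \<Rightarrow> cpoly" where
  "pvar v = Poly_Mapping.single (Poly_Mapping.single v 1) 1"

definition monom_of :: "nat \<Rightarrow> (nat \<Rightarrow> triple) \<Rightarrow> cpoly" where
  "monom_of n f = Poly_Mapping.single
     (\<Sum>i<n. (case f i of (a, b, c) \<Rightarrow>
        Poly_Mapping.single (X i) a + Poly_Mapping.single (Y i) b + Poly_Mapping.single (Z i) c)) 1"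

(* image of m_Lambda in R_n: sum of all distinct monomials obtained from
   x_1^{a_1}.. z_l^{c_l} by permuting indices (0 if l > n).  Distinct monomials
   correspond exactly to exponent assignments f : {0..<n} -> triples whose
   multiset of values is Lambda padded with (0,0,0). *)
definition mono_sym :: "nat \<Rightarrow> triple multiset \<Rightarrow> cpoly" where
  "mono_sym n \<Lambda> = (\<Sum>f \<in> {f. (\<forall>i\<ge>n. f i = (0,0,0)) \<and> size \<Lambda> \<le> n \<and>
       mset (map f [0..<n]) = \<Lambda> + replicate_mset (n - size \<Lambda>) (0,0,0)}. monom_of n f)"

definition in_Rn :: "nat \<Rightarrow> cpoly \<Rightarrow> bool" where
  "in_Rn n p \<longleftrightarrow> (\<forall>mm::var \<Rightarrow>\<^sub>0 nat. mm \<in> Poly_Mapping.keys p \<longrightarrow>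
      (\<forall>v. v \<in> Poly_Mapping.keys mm \<longrightarrow> v \<in> X ` {..<n} \<union> Y ` {..<n} \<union> Z ` {..<n}))"

definition idealI :: "nat \<Rightarrow> nat \<Rightarrow> cpoly set" where
  "idealI r n = {\<Sum>i<n. q i * (pvar (X i) * pvar (Y i) - pvar (Z i) ^ r) | q. \<forall>i. in_Rn n (q i)}"

fun ren_var :: "(nat \<Rightarrow> nat) \<Rightarrow> var \<Rightarrow> var" where
  "ren_var \<sigma> (X i) = X (\<sigma> i)" | "ren_var \<sigma> (Y i) = Y (\<sigma> i)" | "ren_var \<sigma> (Z i) = Z (\<sigma> i)"

definition sym_n :: "nat \<Rightarrow> cpoly \<Rightarrow> bool" where
  "sym_n n p \<longleftrightarrow> (\<forall>\<sigma>. \<sigma> permutes {..<n} \<longrightarrow>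
      (\<forall>mm::var \<Rightarrow>\<^sub>0 nat. Poly_Mapping.lookup p mm = Poly_Mapping.lookup p (Abs_poly_mapping (\<lambda>v. Poly_Mapping.lookup mm (ren_var \<sigma> v)))))"

definition idealI_sym :: "nat \<Rightarrow> nat \<Rightarrow> cpoly set" where
  "idealI_sym r n = {p \<in> idealI r n. sym_n n p}"

(* Equality in S = lim R_n^{S_n}/I_n^{S_n} of elements given by compatible families
   (P n in R_n^{S_n}): componentwise equality of the classes. *)
definition eq_in_S :: "nat \<Rightarrow> (nat \<Rightarrow> cpoly) \<Rightarrow> (nat \<Rightarrow> cpoly) \<Rightarrow> bool" where
  "eq_in_S r P Q \<longleftrightarrow> (\<forall>n\<ge>1. P n - Q n \<in> idealI_sym r n)"

end

theory Submission
  imports Defs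
begin

definition tm :: "nat \<Rightarrow> triple \<Rightarrow> (var \<Rightarrow>\<^sub>0 nat)" where
  "tm i t = (case t of (a, b, c) \<Rightarrow>
        Poly_Mapping.single (X i) a + Poly_Mapping.single (Y i) b + Poly_Mapping.single (Z i) c)"

definition expo :: "nat \<Rightarrow> (nat \<Rightarrow> triple) \<Rightarrow> (var \<Rightarrow>\<^sub>0 nat)" where
  "expo n f = (\<Sum>i<n. tm i (f i))"

definition tadd :: "triple \<Rightarrow> triple \<Rightarrow> triple" where
  "tadd u v = (case u of (a, b, c) \<Rightarrow> case v of (a', b', c') \<Rightarrow> (a + a', b + b', c + c'))"

lemma monom_expo: "monom_of n f = Poly_Mapping.single (expo n f) 1"
  unfolding monom_of_def expo_def tm_def by simp

lemma tm_add: "tm i (tadd u v) = tm i u + tm i v"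
  by (cases u; cases v) (simp add: tm_def tadd_def single_add algebra_simps)

lemma tm_zero[simp]: "tm i (0,0,0) = 0"
  by (simp add: tm_def)


lemma expo_upd': assumes "p < n"
  shows "expo n (f(p := v)) + tm p (f p) = expo n f + tm p v"
proof -
  have fin: "finite {..<n}" by simp
  have "expo n (f(p := v)) = tm p v + (\<Sum>i\<in>{..<n} - {p}. tm i (f i))"
    unfolding expo_def using assms by (subst sum.remove[of _ p]) auto
  moreover have "expo n f = tm p (f p) + (\<Sum>i\<in>{..<n} - {p}. tm i (f i))"
    unfolding expo_def using assms by (subst sum.remove[of _ p]) auto
  ultimately show ?thesis by (simp add: algebra_simps)
qed

lemma monom_mult: "monom_of n f * monom_of n g = Poly_Mapping.single (expo n f + expo n g) 1"
  by (simp add: monom_expo mult_single)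

lemma lookup_tm: "Poly_Mapping.lookup (tm i t) v = (case t of (a,b,c) \<Rightarrow>
   (case v of X j \<Rightarrow> if j = i then a else 0 | Y j \<Rightarrow> if j = i then b else 0 | Z j \<Rightarrow> if j = i then c else 0))"
  by (cases t; cases v) (auto simp: tm_def lookup_add lookup_single when_def)

definition Fs :: "nat \<Rightarrow> triple multiset \<Rightarrow> (nat \<Rightarrow> triple) set" where
  "Fs n M = {f. (\<forall>i\<ge>n. f i = (0,0,0)) \<and> filter_mset (\<lambda>x. x \<noteq> (0,0,0)) (mset (map f [0..<n])) = M}"

lemma Fs_eq:
  assumes "(0,0,0) \<notin># M"
  shows "{f. (\<forall>i\<ge>n. f i = (0,0,0)) \<and> size M \<le> n \<and>
       mset (map f [0..<n]) = M + replicate_mset (n - size M) (0,0,0)} = Fs n M"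
proof -
  have key: "(size M \<le> n \<and> N = M + replicate_mset (n - size M) (0,0,0)) \<longleftrightarrow>
     filter_mset (\<lambda>x. x \<noteq> (0,0,0)) N = M" if sz: "size N = n" for N :: "triple multiset"
  proof
    assume h: "size M \<le> n \<and> N = M + replicate_mset (n - size M) (0,0,0)"
    have "filter_mset (\<lambda>x. x \<noteq> (0,0,0)) M = M" using assms
      by (auto simp: filter_mset_eq_conv)
    then show "filter_mset (\<lambda>x. x \<noteq> (0,0,0)) N = M" using h by simp
  next
    assume h: "filter_mset (\<lambda>x. x \<noteq> (0,0,0)) N = M"
    have part: "N = filter_mset (\<lambda>x. x \<noteq> (0,0,0)) N + filter_mset (\<lambda>x. x = (0,0,0)) N"
      using multiset_partition[of N "\<lambda>x. x \<noteq> (0,0,0)"] by simp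
    have rep: "filter_mset (\<lambda>x. x = (0,0,0)) N = replicate_mset (count N (0,0,0)) (0,0,0)"
      by (rule filter_eq_replicate_mset)
    have "size N = size M + count N (0,0,0)" using part h rep
    proof -
      have e: "N = M + replicate_mset (count N (0,0,0)) (0,0,0)" using part h rep by simp
      have "size N = size (M + replicate_mset (count N (0,0,0)) (0,0,0))" using e by (rule arg_cong)
      then show ?thesis by simp
    qed
    then show "size M \<le> n \<and> N = M + replicate_mset (n - size M) (0,0,0)"
      using part h rep sz by auto
  qed
  show ?thesis unfolding Fs_def
  proof (rule Collect_cong)
    fix f :: "nat \<Rightarrow> triple"
    show "((\<forall>i\<ge>n. f i = (0,0,0)) \<and> size M \<le> n \<and> mset (map f [0..<n]) = M + replicate_mset (n - size M) (0,0,0)) =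
      ((\<forall>i\<ge>n. f i = (0,0,0)) \<and> filter_mset (\<lambda>x. x \<noteq> (0,0,0)) (mset (map f [0..<n])) = M)"
      using key[of "mset (map f [0..<n])"] by simp
  qed
qed

lemma mono_sym_Fs: "(0,0,0) \<notin># M \<Longrightarrow> mono_sym n M = (\<Sum>f\<in>Fs n M. monom_of n f)"
  unfolding mono_sym_def using Fs_eq by simp

lemma Fs_val: "f \<in> Fs n M \<Longrightarrow> i < n \<Longrightarrow> f i \<in> insert (0,0,0) (set_mset M)"
proof -
  assume f: "f \<in> Fs n M" and i: "i < n"
  have "f i \<in># mset (map f [0..<n])" using i by simp
  moreover have "filter_mset (\<lambda>x. x \<noteq> (0,0,0)) (mset (map f [0..<n])) = M" using f unfolding Fs_def by blast
  ultimately show ?thesis by auto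
qed

lemma finite_Fs: "finite (Fs n M)"
proof -
  have "Fs n M \<subseteq> {f. \<forall>x. (x \<in> {..<n} \<longrightarrow> f x \<in> insert (0,0,0) (set_mset M)) \<and> (x \<notin> {..<n} \<longrightarrow> f x = (0,0,0))}"
  proof
    fix f assume f: "f \<in> Fs n M"
    then have "\<forall>i\<ge>n. f i = (0,0,0)" unfolding Fs_def by blast
    with Fs_val[OF f] show "f \<in> {f. \<forall>x. (x \<in> {..<n} \<longrightarrow> f x \<in> insert (0,0,0) (set_mset M)) \<and> (x \<notin> {..<n} \<longrightarrow> f x = (0,0,0))}"
      by auto
  qed
  moreover have "finite {f. \<forall>x. (x \<in> {..<n} \<longrightarrow> f x \<in> insert (0,0,0) (set_mset M)) \<and> (x \<notin> {..<n} \<longrightarrow> f x = (0,0,0))}"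
    by (rule finite_set_of_finite_funs) auto
  ultimately show ?thesis by (rule finite_subset)
qed

lemma mset_map_upd: "p < n \<Longrightarrow> mset (map (f(p := v)) [0..<n]) = add_mset v (mset (map f [0..<n]) - {#f p#})"
proof -
  assume p: "p < n"
  have "map (f(p := v)) [0..<n] = (map f [0..<n])[p := v]"
    by (rule nth_equalityI) (auto simp: nth_list_update)
  then show ?thesis using p by (simp add: mset_update)
qed

lemma filter_diff_single: "filter_mset P (N - {#x#}) = (if P x then filter_mset P N - {#x#} else filter_mset P N)"
  by (cases "P x") (simp_all add: multiset_eq_iff)

lemma card_eq_count: "card {p. p < n \<and> g p = v} = count (mset (map g [0..<n])) v"
  unfolding count_mset count_list_eq_length_filter length_filter_conv_card by (rule arg_cong[where f=card]) auto

lemma core: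
  assumes z: "(0,0,0) \<notin># \<Lambda>" and u: "u = (0,0,0) \<or> u \<in># \<Lambda>"
    and v0: "v \<noteq> (0,0,0)" and vu: "v \<noteq> u"
  shows "(\<Sum>f\<in>Fs n \<Lambda>. \<Sum>p\<in>{p. p < n \<and> f p = u}. monom_of n (f(p := v)))
       = of_nat (count \<Lambda> v + 1) * (\<Sum>g\<in>Fs n (add_mset v (\<Lambda> - {#u#})). monom_of n g)"
proof -
  define L' where "L' = add_mset v (\<Lambda> - {#u#})"
  define P where "P = (\<lambda>x::triple. x \<noteq> (0,0,0))"
  have Lf: "filter_mset P \<Lambda> = \<Lambda>"
    using z by (auto simp: filter_mset_eq_conv P_def)
  have m1: "f(p := v) \<in> Fs n L'" if f: "f \<in> Fs n \<Lambda>" and p: "p < n" and fp: "f p = u" for f p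
  proof -
    have fz: "\<forall>i\<ge>n. (f(p:=v)) i = (0,0,0)" using f p unfolding Fs_def by auto
    have ff: "filter_mset P (mset (map f [0..<n])) = \<Lambda>" using f unfolding Fs_def P_def by blast
    have "filter_mset P (mset (map (f(p:=v)) [0..<n])) = add_mset v (filter_mset P (mset (map f [0..<n]) - {#u#}))"
      using mset_map_upd[OF p, of f v] fp v0 by (simp add: P_def)
    also have "\<dots> = L'"
    proof (cases "u = (0,0,0)")
      case True
      then have "\<Lambda> - {#u#} = \<Lambda>" using z by (simp add: diff_single_trivial)
      then show ?thesis using True ff unfolding L'_def filter_diff_single by (simp add: P_def)
    next
      case False
      then show ?thesis using ff unfolding L'_def filter_diff_single by (simp add: P_def)
    qed
    finally show ?thesis using fz unfolding Fs_def P_def by blast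
  qed
  have m2: "g(p := u) \<in> Fs n \<Lambda>" if g: "g \<in> Fs n L'" and p: "p < n" and gp: "g p = v" for g p
  proof -
    have gz: "\<forall>i\<ge>n. (g(p:=u)) i = (0,0,0)" using g p u z unfolding Fs_def by auto
    have gg: "filter_mset P (mset (map g [0..<n])) = L'" using g unfolding Fs_def P_def by blast
    have "filter_mset P (mset (map (g(p:=u)) [0..<n])) = filter_mset P (add_mset u (mset (map g [0..<n]) - {#v#}))"
      using mset_map_upd[OF p, of g u] gp by simp
    also have "\<dots> = \<Lambda>"
    proof (cases "u = (0,0,0)")
      case True
      then have "\<Lambda> - {#u#} = \<Lambda>" using z by (simp add: diff_single_trivial)
      then show ?thesis using True gg v0 unfolding L'_def filter_diff_single by (simp add: P_def)
    next
      case False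
      then have "u \<in># \<Lambda>" using u by blast
      then show ?thesis using False gg v0 unfolding L'_def filter_diff_single by (simp add: P_def)
    qed
    finally show ?thesis using gz unfolding Fs_def P_def by blast
  qed
  have cnt: "card {p. p < n \<and> g p = v} = count \<Lambda> v + 1" if g: "g \<in> Fs n L'" for g
  proof -
    have gg: "filter_mset P (mset (map g [0..<n])) = L'" using g unfolding Fs_def P_def by blast
    have "count (mset (map g [0..<n])) v = count (filter_mset P (mset (map g [0..<n]))) v"
      using v0 by (simp add: P_def)
    also have "\<dots> = count \<Lambda> v + 1" using gg vu by (simp add: L'_def)
    finally show ?thesis by (simp add: card_eq_count)
  qed
  have fin: "finite {p. p < n \<and> f p = w}" for f :: "nat \<Rightarrow> triple" and w by simp
  have "(\<Sum>f\<in>Fs n \<Lambda>. \<Sum>p\<in>{p. p < n \<and> f p = u}. monom_of n (f(p := v)))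
     = (\<Sum>(f,p)\<in>Sigma (Fs n \<Lambda>) (\<lambda>f. {p. p < n \<and> f p = u}). monom_of n (f(p := v)))"
    by (rule sum.Sigma) (auto simp: finite_Fs)
  also have "\<dots> = (\<Sum>(g,p)\<in>Sigma (Fs n L') (\<lambda>g. {p. p < n \<and> g p = v}). monom_of n g)"
  proof (rule sum.reindex_bij_witness[where i = "\<lambda>(g,p). (g(p:=u), p)" and j = "\<lambda>(f,p). (f(p:=v), p)"])
    fix a assume "a \<in> Sigma (Fs n \<Lambda>) (\<lambda>f. {p. p < n \<and> f p = u})"
    then obtain f p where a: "a = (f,p)" "f \<in> Fs n \<Lambda>" "p < n" "f p = u" by auto
    show "(\<lambda>(g,p). (g(p:=u), p)) ((\<lambda>(f,p). (f(p:=v), p)) a) = a" using a by auto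
    show "(\<lambda>(f,p). (f(p:=v), p)) a \<in> Sigma (Fs n L') (\<lambda>g. {p. p < n \<and> g p = v})" using a m1 by auto
    show "(case (\<lambda>(f,p). (f(p:=v), p)) a of (g, p) \<Rightarrow> monom_of n g) = (case a of (f, p) \<Rightarrow> monom_of n (f(p := v)))"
      using a by simp
  next
    fix b assume "b \<in> Sigma (Fs n L') (\<lambda>g. {p. p < n \<and> g p = v})"
    then obtain g p where b: "b = (g,p)" "g \<in> Fs n L'" "p < n" "g p = v" by auto
    show "(\<lambda>(f,p). (f(p:=v), p)) ((\<lambda>(g,p). (g(p:=u), p)) b) = b" using b by auto
    show "(\<lambda>(g,p). (g(p:=u), p)) b \<in> Sigma (Fs n \<Lambda>) (\<lambda>f. {p. p < n \<and> f p = u})" using b m2 by auto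
  qed
  also have "\<dots> = (\<Sum>g\<in>Fs n L'. \<Sum>p\<in>{p. p < n \<and> g p = v}. monom_of n g)"
    by (rule sum.Sigma[symmetric]) (auto simp: finite_Fs)
  also have "\<dots> = (\<Sum>g\<in>Fs n L'. of_nat (count \<Lambda> v + 1) * monom_of n g)"
    by (rule sum.cong) (simp_all add: cnt)
  also have "\<dots> = of_nat (count \<Lambda> v + 1) * (\<Sum>g\<in>Fs n L'. monom_of n g)"
    by (simp add: sum_distrib_left)
  finally show ?thesis unfolding L'_def .
qed

lemma lookup_tm': "Poly_Mapping.lookup (tm i t) v =
   (case v of X j \<Rightarrow> if j = i then fst t else 0 | Y j \<Rightarrow> if j = i then fst (snd t) else 0
     | Z j \<Rightarrow> if j = i then snd (snd t) else 0)"
  by (cases v; cases t) (auto simp: lookup_tm)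

lemma lookup_expo: "Poly_Mapping.lookup (expo n g) v =
   (case v of X i \<Rightarrow> if i < n then fst (g i) else 0 | Y i \<Rightarrow> if i < n then fst (snd (g i)) else 0
     | Z i \<Rightarrow> if i < n then snd (snd (g i)) else 0)"
  by (cases v) (simp_all add: expo_def lookup_sum lookup_tm' if_distrib sum.delta cong: if_cong)

lemma lookup_sum_monom:
  "Poly_Mapping.lookup (\<Sum>x\<in>S. monom_of n (h x)) mm = (\<Sum>x\<in>S. if expo n (h x) = mm then 1 else 0)"
  by (simp add: lookup_sum monom_expo lookup_single when_def)

lemma sym_sum:
  assumes fin: "finite S"
    and perm: "\<And>\<sigma>. \<sigma> permutes {..<n} \<Longrightarrow> \<exists>\<tau> \<tau>'. \<forall>x\<in>S. \<tau> x \<in> S \<and> \<tau>' x \<in> S \<and> \<tau>' (\<tau> x) = x \<and> \<tau> (\<tau>' x) = x \<and> h (\<tau> x) = h x \<circ> \<sigma>"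
  shows "sym_n n (\<Sum>x\<in>S. monom_of n (h x))"
  unfolding sym_n_def
proof (intro allI impI)
  fix \<sigma> :: "nat \<Rightarrow> nat" and mm :: "var \<Rightarrow>\<^sub>0 nat"
  assume s: "\<sigma> permutes {..<n}"
  define mm' where "mm' = Abs_poly_mapping (\<lambda>v. Poly_Mapping.lookup mm (ren_var \<sigma> v))"
  have injr: "inj (ren_var \<sigma>)"
  proof (rule injI)
    fix v w assume "ren_var \<sigma> v = ren_var \<sigma> w"
    then show "v = w" using permutes_inj[OF s]
      by (cases v; cases w) (auto dest: injD)
  qed
  have "{v. Poly_Mapping.lookup mm (ren_var \<sigma> v) \<noteq> 0} = ren_var \<sigma> -` Poly_Mapping.keys mm"
    by (auto simp: in_keys_iff)
  then have "finite {v. Poly_Mapping.lookup mm (ren_var \<sigma> v) \<noteq> 0}"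
    using finite_vimageI[OF finite_keys injr] by simp
  then have lm': "Poly_Mapping.lookup mm' = (\<lambda>v. Poly_Mapping.lookup mm (ren_var \<sigma> v))"
    unfolding mm'_def by (simp add: Abs_poly_mapping_inverse)
  have rinv: "ren_var \<sigma> (ren_var (inv \<sigma>) v) = v" for v
    by (cases v) (simp_all add: permutes_inverses[OF s])
  have lt: "\<sigma> i < n \<longleftrightarrow> i < n" for i
    using permutes_in_image[OF s, of i] by simp
  have le: "Poly_Mapping.lookup (expo n (g \<circ> \<sigma>)) v = Poly_Mapping.lookup (expo n g) (ren_var \<sigma> v)" for g v
    by (cases v) (simp_all add: lookup_expo lt)
  have key: "expo n (g \<circ> \<sigma>) = mm' \<longleftrightarrow> expo n g = mm" for g
  proof
    assume "expo n (g \<circ> \<sigma>) = mm'"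
    have "\<forall>v. Poly_Mapping.lookup (expo n g) (ren_var \<sigma> v) = Poly_Mapping.lookup mm (ren_var \<sigma> v)"
    proof
      fix v
      have "Poly_Mapping.lookup (expo n (g \<circ> \<sigma>)) v = Poly_Mapping.lookup mm' v"
        using \<open>expo n (g \<circ> \<sigma>) = mm'\<close> by simp
      then show "Poly_Mapping.lookup (expo n g) (ren_var \<sigma> v) = Poly_Mapping.lookup mm (ren_var \<sigma> v)"
        by (simp add: le lm')
    qed
    have "\<forall>w. Poly_Mapping.lookup (expo n g) w = Poly_Mapping.lookup mm w"
    proof
      fix w
      show "Poly_Mapping.lookup (expo n g) w = Poly_Mapping.lookup mm w"
        using \<open>\<forall>v. _\<close>[rule_format, of "ren_var (inv \<sigma>) w"] by (simp add: rinv)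
    qed
    then show "expo n g = mm" by (simp add: poly_mapping_eqI)
  next
    assume "expo n g = mm"
    then show "expo n (g \<circ> \<sigma>) = mm'"
      by (intro poly_mapping_eqI) (simp add: le lm')
  qed
  obtain \<tau> \<tau>' where tt: "\<forall>x\<in>S. \<tau> x \<in> S \<and> \<tau>' x \<in> S \<and> \<tau>' (\<tau> x) = x \<and> \<tau> (\<tau>' x) = x \<and> h (\<tau> x) = h x \<circ> \<sigma>"
    using perm[OF s] by blast
  have "(\<Sum>x\<in>S. if expo n (h x) = mm' then 1 else 0) = (\<Sum>x\<in>S. if expo n (h (\<tau> x)) = mm' then (1::complex) else 0)"
    by (rule sum.reindex_bij_witness[where i = \<tau> and j = \<tau>']) (use tt in auto)
  also have "\<dots> = (\<Sum>x\<in>S. if expo n (h x) = mm then 1 else 0)"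
  proof (rule sum.cong)
    fix x assume "x \<in> S"
    then have "h (\<tau> x) = h x \<circ> \<sigma>" using tt by blast
    then show "(if expo n (h (\<tau> x)) = mm' then (1::complex) else 0) = (if expo n (h x) = mm then 1 else 0)"
      by (simp only: key)
  qed simp
  finally show "Poly_Mapping.lookup (\<Sum>x\<in>S. monom_of n (h x)) mm =
         Poly_Mapping.lookup (\<Sum>x\<in>S. monom_of n (h x)) (Abs_poly_mapping (\<lambda>v. Poly_Mapping.lookup mm (ren_var \<sigma> v)))"
    unfolding lookup_sum_monom mm'_def[symmetric] by simp
qed

lemma sym_diff:
  assumes hp: "sym_n n p" and hq: "sym_n n q"
  shows "sym_n n (p - q)"
  unfolding sym_n_def lookup_minus
proof (intro allI impI)
  fix \<sigma> :: "nat \<Rightarrow> nat" and mm assume s: "\<sigma> permutes {..<n}"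
  have "Poly_Mapping.lookup p mm = Poly_Mapping.lookup p (Abs_poly_mapping (\<lambda>v. Poly_Mapping.lookup mm (ren_var \<sigma> v)))"
    "Poly_Mapping.lookup q mm = Poly_Mapping.lookup q (Abs_poly_mapping (\<lambda>v. Poly_Mapping.lookup mm (ren_var \<sigma> v)))"
    using hp hq s unfolding sym_n_def by blast+
  then show "Poly_Mapping.lookup p mm - Poly_Mapping.lookup q mm =
    Poly_Mapping.lookup p (Abs_poly_mapping (\<lambda>v. Poly_Mapping.lookup mm (ren_var \<sigma> v))) -
    Poly_Mapping.lookup q (Abs_poly_mapping (\<lambda>v. Poly_Mapping.lookup mm (ren_var \<sigma> v)))" by (rule arg_cong2)
qed

lemma sym_zero: "sym_n n 0"
  unfolding sym_n_def by simp

lemma sym_sum_gen: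
  assumes h: "\<And>x. x \<in> A \<Longrightarrow> sym_n n (f x)"
  shows "sym_n n (\<Sum>x\<in>A. f x)"
  unfolding sym_n_def lookup_sum
proof (intro allI impI sum.cong refl)
  fix \<sigma> :: "nat \<Rightarrow> nat" and mm x assume s: "\<sigma> permutes {..<n}" and x: "x \<in> A"
  show "Poly_Mapping.lookup (f x) mm = Poly_Mapping.lookup (f x) (Abs_poly_mapping (\<lambda>v. Poly_Mapping.lookup mm (ren_var \<sigma> v)))"
    using h[OF x] s unfolding sym_n_def by blast
qed

lemma Fs_perm:
  assumes s: "\<sigma> permutes {..<n}" and f: "f \<in> Fs n M"
  shows "f \<circ> \<sigma> \<in> Fs n M"
proof -
  have "mset (map \<sigma> [0..<n]) = mset [0..<n]"
    using permutes_image_mset[OF s] by (simp add: mset_map lessThan_atLeast0)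
  then have "mset (map (f \<circ> \<sigma>) [0..<n]) = mset (map f [0..<n])"
    by (simp only: map_map[symmetric] mset_map)
  moreover have "\<forall>i\<ge>n. (f \<circ> \<sigma>) i = (0,0,0)"
    using f permutes_not_in[OF s] unfolding Fs_def by auto
  ultimately show ?thesis using f unfolding Fs_def by auto
qed

lemma sym_W:
  "sym_n n (\<Sum>(f,p)\<in>Sigma (Fs n M) (\<lambda>f. {p. p < n \<and> f p = t}). monom_of n (f(p := e)))"
proof -
  have "sym_n n (\<Sum>x\<in>Sigma (Fs n M) (\<lambda>f. {p. p < n \<and> f p = t}). monom_of n ((\<lambda>(f,p). f(p := e)) x))"
  proof (rule sym_sum)
    show "finite (Sigma (Fs n M) (\<lambda>f. {p. p < n \<and> f p = t}))"
      by (rule finite_SigmaI) (simp_all add: finite_Fs)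
  next
    fix \<sigma> :: "nat \<Rightarrow> nat" assume s: "\<sigma> permutes {..<n}"
    have si: "inv \<sigma> permutes {..<n}" by (rule permutes_inv[OF s])
    let ?S = "Sigma (Fs n M) (\<lambda>f. {p. p < n \<and> f p = t})"
    let ?t = "\<lambda>(f,p). (f \<circ> \<sigma>, inv \<sigma> p)"
    let ?t' = "\<lambda>(f,p). (f \<circ> inv \<sigma>, \<sigma> p)"
    have lt: "\<sigma> i < n \<longleftrightarrow> i < n" "inv \<sigma> i < n \<longleftrightarrow> i < n" for i
      using permutes_in_image[OF s, of i] permutes_in_image[OF si, of i] by simp_all
    have "\<forall>x\<in>?S. ?t x \<in> ?S \<and> ?t' x \<in> ?S \<and> ?t' (?t x) = x \<and> ?t (?t' x) = x \<and>
        (\<lambda>(f,p). f(p := e)) (?t x) = (\<lambda>(f,p). f(p := e)) x \<circ> \<sigma>"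
    proof
      fix x assume "x \<in> ?S"
      then obtain f p where x: "x = (f,p)" "f \<in> Fs n M" "p < n" "f p = t" by auto
      have a: "f \<circ> \<sigma> \<in> Fs n M" "f \<circ> inv \<sigma> \<in> Fs n M" using Fs_perm[OF s x(2)] Fs_perm[OF si x(2)] by auto
      have b: "f \<circ> inv \<sigma> \<circ> \<sigma> = f" "f \<circ> \<sigma> \<circ> inv \<sigma> = f"
        by (auto simp: fun_eq_iff permutes_inverses[OF s])
      have c: "(f \<circ> \<sigma>)(inv \<sigma> p := e) = f(p := e) \<circ> \<sigma>"
        by (auto simp: fun_eq_iff permutes_inverses[OF s])
      show "?t x \<in> ?S \<and> ?t' x \<in> ?S \<and> ?t' (?t x) = x \<and> ?t (?t' x) = x \<and>
        (\<lambda>(f,p). f(p := e)) (?t x) = (\<lambda>(f,p). f(p := e)) x \<circ> \<sigma>"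
        using x a b c lt by (simp add: permutes_inverses[OF s])
    qed
    then show "\<exists>\<tau> \<tau>'. \<forall>x\<in>?S. \<tau> x \<in> ?S \<and> \<tau>' x \<in> ?S \<and> \<tau>' (\<tau> x) = x \<and> \<tau> (\<tau>' x) = x \<and>
        (\<lambda>(f,p). f(p := e)) (\<tau> x) = (\<lambda>(f,p). f(p := e)) x \<circ> \<sigma>" by blast
  qed
  then show ?thesis by (simp add: case_prod_beta')
qed

lemma in_Rn_0: "in_Rn n 0"
  unfolding in_Rn_def by simp

lemma in_Rn_uminus: "in_Rn n p \<Longrightarrow> in_Rn n (- p)"
  unfolding in_Rn_def by (simp add: in_keys_iff)

lemma in_Rn_monom: "in_Rn n (monom_of n f)"
  unfolding in_Rn_def monom_expo
proof (intro allI impI)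
  fix mm :: "var \<Rightarrow>\<^sub>0 nat" and v
  assume "mm \<in> Poly_Mapping.keys (Poly_Mapping.single (expo n f) (1::complex))" and v: "v \<in> Poly_Mapping.keys mm"
  then have "mm = expo n f" by (simp only: keys_single one_neq_zero if_False singleton_iff)
  with v have "Poly_Mapping.lookup (expo n f) v \<noteq> 0" by (simp add: in_keys_iff)
  then show "v \<in> X ` {..<n} \<union> Y ` {..<n} \<union> Z ` {..<n}"
    by (cases v) (auto simp: lookup_expo split: if_splits)
qed

lemma in_Rn_add:
  assumes hp: "in_Rn n p" and hq: "in_Rn n q"
  shows "in_Rn n (p + q)"
  unfolding in_Rn_def
proof (intro allI impI)
  fix mm :: "var \<Rightarrow>\<^sub>0 nat" and v
  assume m: "mm \<in> Poly_Mapping.keys (p + q)" and v: "v \<in> Poly_Mapping.keys mm"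
  have "mm \<in> Poly_Mapping.keys p \<union> Poly_Mapping.keys q" using keys_add[of p q] m by (rule subsetD)
  then show "v \<in> X ` {..<n} \<union> Y ` {..<n} \<union> Z ` {..<n}"
    using hp hq v unfolding in_Rn_def by (meson UnE)
qed

lemma ideal_0: "0 \<in> idealI r n"
proof -
  have "\<exists>q. (0::cpoly) = (\<Sum>i<n. q i * (pvar (X i) * pvar (Y i) - pvar (Z i) ^ r)) \<and> (\<forall>i. in_Rn n (q i))"
    by (rule exI[where x = "\<lambda>i. 0"]) (simp add: in_Rn_0)
  then show ?thesis unfolding idealI_def mem_Collect_eq .
qed

lemma ideal_add: "x \<in> idealI r n \<Longrightarrow> y \<in> idealI r n \<Longrightarrow> x + y \<in> idealI r n"
proof -
  assume "x \<in> idealI r n" "y \<in> idealI r n"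
  then obtain q1 q2 where q: "x = (\<Sum>i<n. q1 i * (pvar (X i) * pvar (Y i) - pvar (Z i) ^ r))" "\<forall>i. in_Rn n (q1 i)"
     "y = (\<Sum>i<n. q2 i * (pvar (X i) * pvar (Y i) - pvar (Z i) ^ r))" "\<forall>i. in_Rn n (q2 i)"
    unfolding idealI_def by blast
  then have "x + y = (\<Sum>i<n. (q1 i + q2 i) * (pvar (X i) * pvar (Y i) - pvar (Z i) ^ r))"
    by (simp add: sum.distrib distrib_right)
  moreover have "\<forall>i. in_Rn n (q1 i + q2 i)" using q by (simp add: in_Rn_add)
  ultimately have "x + y = (\<Sum>i<n. (q1 i + q2 i) * (pvar (X i) * pvar (Y i) - pvar (Z i) ^ r)) \<and> (\<forall>i. in_Rn n (q1 i + q2 i))"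
    by (rule conjI)
  then have "\<exists>q. x + y = (\<Sum>i<n. q i * (pvar (X i) * pvar (Y i) - pvar (Z i) ^ r)) \<and> (\<forall>i. in_Rn n (q i))"
    by (rule exI[where x = "\<lambda>i. q1 i + q2 i"])
  then show ?thesis unfolding idealI_def mem_Collect_eq .
qed

lemma ideal_sum: "finite A \<Longrightarrow> (\<And>x. x \<in> A \<Longrightarrow> g x \<in> idealI r n) \<Longrightarrow> (\<Sum>x\<in>A. g x) \<in> idealI r n"
  by (induction A rule: finite_induct) (simp_all add: ideal_0 ideal_add)

lemma ideal_gen:
  assumes p: "p < n" and q: "in_Rn n q"
  shows "q * (pvar (X p) * pvar (Y p) - pvar (Z p) ^ r) \<in> idealI r n"
proof -
  define Q where "Q = (\<lambda>i. if i = p then q else 0)"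
  have "(\<Sum>i<n. Q i * (pvar (X i) * pvar (Y i) - pvar (Z i) ^ r)) = q * (pvar (X p) * pvar (Y p) - pvar (Z p) ^ r)"
  proof -
    have "(\<Sum>i<n. Q i * (pvar (X i) * pvar (Y i) - pvar (Z i) ^ r)) = (\<Sum>i<n. if i = p then q * (pvar (X p) * pvar (Y p) - pvar (Z p) ^ r) else 0)"
      by (rule sum.cong) (auto simp: Q_def)
    then show ?thesis using p by simp
  qed
  moreover have "\<forall>i. in_Rn n (Q i)" using q by (simp add: Q_def in_Rn_0)
  ultimately have "q * (pvar (X p) * pvar (Y p) - pvar (Z p) ^ r) = (\<Sum>i<n. Q i * (pvar (X i) * pvar (Y i) - pvar (Z i) ^ r)) \<and> (\<forall>i. in_Rn n (Q i))"
    by simp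
  then have "\<exists>Q. q * (pvar (X p) * pvar (Y p) - pvar (Z p) ^ r) = (\<Sum>i<n. Q i * (pvar (X i) * pvar (Y i) - pvar (Z i) ^ r)) \<and> (\<forall>i. in_Rn n (Q i))"
    by (rule exI[where x = Q])
  then show ?thesis unfolding idealI_def mem_Collect_eq .
qed

lemma expo_upd_split: "p < n \<Longrightarrow> expo n (f(p := w)) = tm p w + (\<Sum>i\<in>{..<n} - {p}. tm i (f i))"
  unfolding expo_def by (subst sum.remove[of _ p]) auto

lemma pvar_pow: "pvar v ^ r = Poly_Mapping.single (Poly_Mapping.single v r) (1::complex)"
  by (induction r) (simp_all add: pvar_def mult_single flip: single_add)

lemma red:
  assumes p: "p < n"
  shows "monom_of n (f(p := (\<alpha>, \<beta>, \<gamma> + r))) - monom_of n (f(p := (\<alpha> + 1, \<beta> + 1, \<gamma>)))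
    = (- monom_of n (f(p := (\<alpha>, \<beta>, \<gamma>)))) * (pvar (X p) * pvar (Y p) - pvar (Z p) ^ r)"
proof -
  define R where "R = (\<Sum>i\<in>{..<n} - {p}. tm i (f i))"
  have t1: "tm p (\<alpha>, \<beta>, \<gamma> + r) = tm p (\<alpha>, \<beta>, \<gamma>) + Poly_Mapping.single (Z p) r"
    unfolding tm_def prod.case single_add by (simp only: add_ac)
  have t2: "tm p (\<alpha> + 1, \<beta> + 1, \<gamma>) = tm p (\<alpha>, \<beta>, \<gamma>) + (Poly_Mapping.single (X p) 1 + Poly_Mapping.single (Y p) 1)"
    unfolding tm_def prod.case single_add by (simp only: add_ac)
  have e1: "expo n (f(p := (\<alpha>, \<beta>, \<gamma> + r))) = expo n (f(p := (\<alpha>, \<beta>, \<gamma>))) + Poly_Mapping.single (Z p) r"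
    using p by (simp only: expo_upd_split t1 add_ac)
  have e2: "expo n (f(p := (\<alpha> + 1, \<beta> + 1, \<gamma>))) = expo n (f(p := (\<alpha>, \<beta>, \<gamma>))) + (Poly_Mapping.single (X p) 1 + Poly_Mapping.single (Y p) 1)"
    by (simp only: expo_upd_split[OF p] t2) (simp only: add_ac)
  have "monom_of n (f(p := (\<alpha>, \<beta>, \<gamma>))) * pvar (Z p) ^ r = monom_of n (f(p := (\<alpha>, \<beta>, \<gamma> + r)))"
    by (simp add: pvar_pow monom_expo mult_single e1)
  moreover have "monom_of n (f(p := (\<alpha>, \<beta>, \<gamma>))) * (pvar (X p) * pvar (Y p)) = monom_of n (f(p := (\<alpha> + 1, \<beta> + 1, \<gamma>)))"
    unfolding pvar_def monom_expo mult_single e2 by simp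
  ultimately show ?thesis by (simp add: algebra_simps)
qed

lemma prod_monom:
  assumes p: "p < n"
  shows "monom_of n ((\<lambda>_. (0,0,0))(p := d)) * monom_of n f = monom_of n (f(p := tadd d (f p)))"
proof -
  have "expo n ((\<lambda>_. (0,0,0))(p := d)) = tm p d"
    using p by (simp add: expo_upd_split)
  moreover have "expo n f = tm p (f p) + (\<Sum>i\<in>{..<n} - {p}. tm i (f i))"
    using expo_upd_split[OF p, of f "f p"] by simp
  moreover have "expo n (f(p := tadd d (f p))) = tm p (tadd d (f p)) + (\<Sum>i\<in>{..<n} - {p}. tm i (f i))"
    using expo_upd_split[OF p] by simp
  ultimately show ?thesis unfolding monom_expo mult_single mult_1 tm_add by (simp only: add.assoc)
qed

lemma filt_empty: "(\<forall>x\<in>#M. \<not> P x) \<Longrightarrow> filter_mset P M = {#}"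
  by (induction M) auto

lemma Fs_empty: "Fs n {#} = {\<lambda>_. (0,0,0)}"
proof
  show "Fs n {#} \<subseteq> {\<lambda>_. (0,0,0)}"
  proof
    fix f assume f: "f \<in> Fs n {#}"
    have z: "\<forall>i\<ge>n. f i = (0,0,0)" and e: "filter_mset (\<lambda>x. x \<noteq> (0,0,0)) (mset (map f [0..<n])) = {#}"
      using f unfolding Fs_def by blast+
    have "f i = (0,0,0)" for i
    proof (rule ccontr)
      assume ne: "f i \<noteq> (0,0,0)"
      then have "i < n" using z by (meson not_le)
      then have "f i \<in># mset (map f [0..<n])" by simp
      with ne have m: "f i \<in># filter_mset (\<lambda>x. x \<noteq> (0,0,0)) (mset (map f [0..<n]))" by simp
      show False using m[unfolded e] by simp
    qed
    then have "f = (\<lambda>_. (0,0,0))" by (rule ext)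
    then show "f \<in> {\<lambda>_. (0,0,0)}" by (simp only: singleton_iff)
  qed
next
  show "{\<lambda>_. (0,0,0)} \<subseteq> Fs n {#}"
  proof -
    have "\<forall>x\<in>#mset (map (\<lambda>_. (0::nat,0::nat,0::nat)) [0..<n]). \<not> x \<noteq> (0,0,0)" by simp
    then have "filter_mset (\<lambda>x. x \<noteq> (0,0,0)) (mset (map (\<lambda>_. (0::nat,0::nat,0::nat)) [0..<n])) = {#}"
      by (rule filt_empty)
    then show ?thesis unfolding Fs_def mem_Collect_eq singleton_iff subset_iff by blast
  qed
qed

lemma W_Sigma: "(\<Sum>f\<in>Fs n M. \<Sum>p\<in>{p. p < n \<and> f p = t}. monom_of n (f(p := e)))
   = (\<Sum>(f,p)\<in>Sigma (Fs n M) (\<lambda>f. {p. p < n \<and> f p = t}). monom_of n (f(p := e)))"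
  by (rule sum.Sigma) (simp_all add: finite_Fs)

lemma sym_W': "sym_n n (\<Sum>f\<in>Fs n M. \<Sum>p\<in>{p. p < n \<and> f p = t}. monom_of n (f(p := e)))"
  unfolding W_Sigma by (rule sym_W)

lemma ideal_W:
  assumes "c + k \<ge> r"
  shows "(\<Sum>f\<in>Fs n M. \<Sum>p\<in>{p. p < n \<and> f p = t}. monom_of n (f(p := (a + i, b + j, c + k))))
       - (\<Sum>f\<in>Fs n M. \<Sum>p\<in>{p. p < n \<and> f p = t}. monom_of n (f(p := (a + i + 1, b + j + 1, c + k - r))))
       \<in> idealI r n"
proof -
  have e: "c + k = (c + k - r) + r" using assms by simp
  have "(\<Sum>f\<in>Fs n M. \<Sum>p\<in>{p. p < n \<and> f p = t}. monom_of n (f(p := (a + i, b + j, c + k))))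
       - (\<Sum>f\<in>Fs n M. \<Sum>p\<in>{p. p < n \<and> f p = t}. monom_of n (f(p := (a + i + 1, b + j + 1, c + k - r))))
     = (\<Sum>f\<in>Fs n M. \<Sum>p\<in>{p. p < n \<and> f p = t}. monom_of n (f(p := (a + i, b + j, c + k))) - monom_of n (f(p := (a + i + 1, b + j + 1, c + k - r))))"
    by (simp only: sum_subtractf)
  also have "\<dots> \<in> idealI r n"
  proof (rule ideal_sum[OF finite_Fs], rule ideal_sum)
    fix f p assume "p \<in> {p. p < n \<and> f p = t}"
    then have p: "p < n" by simp
    have "monom_of n (f(p := (a + i, b + j, c + k))) - monom_of n (f(p := (a + i + 1, b + j + 1, c + k - r)))
      = (- monom_of n (f(p := (a + i, b + j, c + k - r)))) * (pvar (X p) * pvar (Y p) - pvar (Z p) ^ r)"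
      using red[OF p, where f=f and \<alpha>="a + i" and \<beta>="b + j" and \<gamma>="c + k - r" and r=r] by (simp only: e[symmetric])
    also have "\<dots> \<in> idealI r n"
      by (rule ideal_gen[OF p in_Rn_uminus[OF in_Rn_monom]])
    finally show "monom_of n (f(p := (a + i, b + j, c + k))) - monom_of n (f(p := (a + i + 1, b + j + 1, c + k - r))) \<in> idealI r n" .
  qed simp
  finally show ?thesis .
qed

theorem lemma1:
  fixes r a b c :: nat and \<Lambda> :: "triple multiset"
  assumes "r \<ge> 1" and "(a, b, c) \<noteq> (0, 0, 0)" and "(0, 0, 0) \<notin># \<Lambda>"
  shows "eq_in_S r
    (\<lambda>n. mono_sym n {#(a, b, c)#} * mono_sym n \<Lambda>)
    (\<lambda>n. of_nat (count \<Lambda> (a, b, c) + 1) * mono_sym n (add_mset (a, b, c) \<Lambda>)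
       + (\<Sum>t \<in> {(i, j, k). (i, j, k) \<in># \<Lambda> \<and> c + k \<le> r - 1}.
            (case t of (i, j, k) \<Rightarrow>
              of_nat (count \<Lambda> (a + i, b + j, c + k) + 1)
                * mono_sym n (add_mset (a + i, b + j, c + k) (\<Lambda> - {#(i, j, k)#}))))
       + (\<Sum>t \<in> {(i, j, k). (i, j, k) \<in># \<Lambda> \<and> c + k \<ge> r}.
            (case t of (i, j, k) \<Rightarrow>
              of_nat (count \<Lambda> (a + i + 1, b + j + 1, c + k - r) + 1)
                * mono_sym n (add_mset (a + i + 1, b + j + 1, c + k - r) (\<Lambda> - {#(i, j, k)#})))))"
proof -
  have z: "(0,0,0) \<notin># \<Lambda>" by (rule assms(3))
  have d0: "(a,b,c) \<noteq> (0,0,0)" by (rule assms(2))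
  define W where "W n t e = (\<Sum>f\<in>Fs n \<Lambda>. \<Sum>p\<in>{p. p < n \<and> f p = t}. monom_of n (f(p := e)))" for n t e
  define G1 where "G1 n t = (case t of (i, j, k) \<Rightarrow>
              of_nat (count \<Lambda> (a + i, b + j, c + k) + 1)
                * mono_sym n (add_mset (a + i, b + j, c + k) (\<Lambda> - {#(i, j, k)#})))" for n t
  define G2 where "G2 n t = (case t of (i, j, k) \<Rightarrow>
              of_nat (count \<Lambda> (a + i + 1, b + j + 1, c + k - r) + 1)
                * mono_sym n (add_mset (a + i + 1, b + j + 1, c + k - r) (\<Lambda> - {#(i, j, k)#})))" for n t
  define Dl where "Dl t = (case t of (i, j, k) \<Rightarrow> (a + i + 1, b + j + 1, c + k - r))" for t
  define small where "small (t::triple) = (case t of (i, j, k) \<Rightarrow> c + k \<le> r - 1)" for t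
  define Pn where "Pn n = mono_sym n {#(a, b, c)#} * mono_sym n \<Lambda>" for n
  define T0 where "T0 n = of_nat (count \<Lambda> (a, b, c) + 1) * mono_sym n (add_mset (a, b, c) \<Lambda>)" for n
  define A1 where "A1 = {(i, j, k). (i, j, k) \<in># \<Lambda> \<and> c + k \<le> r - 1}"
  define A2 where "A2 = {(i, j, k). (i, j, k) \<in># \<Lambda> \<and> c + k \<ge> r}"
  have nz: "(0,0,0) \<notin># add_mset v (\<Lambda> - {#t#})" if "v \<noteq> (0,0,0)" for v t
    using that z by (auto dest: in_diffD)
  have ms1: "mono_sym n {#(a, b, c)#} = (\<Sum>p<n. monom_of n ((\<lambda>_. (0,0,0))(p := (a, b, c))))" for n
  proof -
    have "(\<Sum>f\<in>Fs n {#}. \<Sum>p\<in>{p. p < n \<and> f p = (0,0,0)}. monom_of n (f(p := (a, b, c))))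
       = of_nat (count {#} (a, b, c) + 1) * (\<Sum>g\<in>Fs n (add_mset (a, b, c) ({#} - {#(0,0,0)#})). monom_of n g)"
      by (rule core) (use d0 in auto)
    moreover have "(\<Sum>f\<in>Fs n {#}. \<Sum>p\<in>{p. p < n \<and> f p = (0,0,0)}. monom_of n (f(p := (a, b, c))))
        = (\<Sum>p<n. monom_of n ((\<lambda>_. (0,0,0))(p := (a, b, c))))"
    proof -
      have s: "{p. p < n \<and> (\<lambda>_. (0::nat,0::nat,0::nat)) p = (0,0,0)} = {..<n}" by auto
      show ?thesis unfolding Fs_empty by (simp only: s sum.insert[OF finite.emptyI] empty_iff not_False_eq_True sum.empty add_0_right)
    qed
    ultimately have "(\<Sum>p<n. monom_of n ((\<lambda>_. (0,0,0))(p := (a, b, c)))) = (\<Sum>g\<in>Fs n {#(a, b, c)#}. monom_of n g)"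
      by simp
    moreover have "(0,0,0) \<notin># {#(a, b, c)#}" using d0 by simp
    ultimately show ?thesis by (simp add: mono_sym_Fs)
  qed
  have P2: "Pn n = (\<Sum>f\<in>Fs n \<Lambda>. \<Sum>p<n. monom_of n (f(p := tadd (a, b, c) (f p))))" for n
  proof -
    have "Pn n = (\<Sum>p<n. monom_of n ((\<lambda>_. (0,0,0))(p := (a, b, c)))) * (\<Sum>f\<in>Fs n \<Lambda>. monom_of n f)"
      unfolding Pn_def ms1 mono_sym_Fs[OF z] ..
    also have "\<dots> = (\<Sum>p<n. \<Sum>f\<in>Fs n \<Lambda>. monom_of n ((\<lambda>_. (0,0,0))(p := (a, b, c))) * monom_of n f)"
      by (rule sum_product)
    also have "\<dots> = (\<Sum>p<n. \<Sum>f\<in>Fs n \<Lambda>. monom_of n (f(p := tadd (a, b, c) (f p))))"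
      by (rule sum.cong[OF refl], rule sum.cong[OF refl]) (simp add: prod_monom)
    also have "\<dots> = (\<Sum>f\<in>Fs n \<Lambda>. \<Sum>p<n. monom_of n (f(p := tadd (a, b, c) (f p))))"
      by (rule sum.swap)
    finally show ?thesis .
  qed
  have P3: "(\<Sum>p<n. monom_of n (f(p := tadd (a, b, c) (f p))))
      = (\<Sum>u\<in>insert (0,0,0) (set_mset \<Lambda>). \<Sum>p\<in>{p. p < n \<and> f p = u}. monom_of n (f(p := tadd (a, b, c) u)))"
    if f: "f \<in> Fs n \<Lambda>" for f n
  proof -
    have sub: "f ` {..<n} \<subseteq> insert (0,0,0) (set_mset \<Lambda>)" by (rule image_subsetI) (rule Fs_val[OF f], simp)
    have "(\<Sum>p<n. monom_of n (f(p := tadd (a, b, c) (f p))))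
       = (\<Sum>u\<in>insert (0,0,0) (set_mset \<Lambda>). \<Sum>p\<in>{x. x \<in> {..<n} \<and> f x = u}. monom_of n (f(p := tadd (a, b, c) (f p))))"
      by (rule sum.group[symmetric]) (simp_all add: sub)
    also have "\<dots> = (\<Sum>u\<in>insert (0,0,0) (set_mset \<Lambda>). \<Sum>p\<in>{p. p < n \<and> f p = u}. monom_of n (f(p := tadd (a, b, c) u)))"
      by (rule sum.cong[OF refl], rule sum.cong) auto
    finally show ?thesis .
  qed
  have P4: "Pn n = T0 n + (\<Sum>t\<in>set_mset \<Lambda>. W n t (tadd (a, b, c) t))" for n
  proof -
    have "Pn n = (\<Sum>f\<in>Fs n \<Lambda>. \<Sum>u\<in>insert (0,0,0) (set_mset \<Lambda>). \<Sum>p\<in>{p. p < n \<and> f p = u}. monom_of n (f(p := tadd (a, b, c) u)))"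
      unfolding P2 by (rule sum.cong[OF refl]) (rule P3)
    also have "\<dots> = (\<Sum>u\<in>insert (0,0,0) (set_mset \<Lambda>). W n u (tadd (a, b, c) u))"
      unfolding W_def by (rule sum.swap)
    also have "\<dots> = W n (0,0,0) (tadd (a, b, c) (0,0,0)) + (\<Sum>t\<in>set_mset \<Lambda>. W n t (tadd (a, b, c) t))"
      using z by simp
    also have "W n (0,0,0) (tadd (a, b, c) (0,0,0)) = T0 n"
    proof -
      have "W n (0,0,0) (a, b, c) = of_nat (count \<Lambda> (a, b, c) + 1) * (\<Sum>g\<in>Fs n (add_mset (a, b, c) (\<Lambda> - {#(0,0,0)#})). monom_of n g)"
        unfolding W_def by (rule core) (use z d0 in auto)
      moreover have "\<Lambda> - {#(0,0,0)#} = \<Lambda>" using z by (simp add: diff_single_trivial)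
      moreover have "(0,0,0) \<notin># add_mset (a, b, c) \<Lambda>" using z d0 by simp
      ultimately show ?thesis unfolding T0_def by (simp add: tadd_def mono_sym_Fs)
    qed
    finally show ?thesis .
  qed
  have Q1: "(\<Sum>t\<in>A1. G1 n t) + (\<Sum>t\<in>A2. G2 n t) = (\<Sum>t\<in>set_mset \<Lambda>. if small t then G1 n t else G2 n t)" for n
  proof -
    have un: "set_mset \<Lambda> = A1 \<union> A2" unfolding A1_def A2_def using assms(1) by auto
    have dj: "A1 \<inter> A2 = {}" unfolding A1_def A2_def using assms(1) by auto
    have f1: "finite A1" "finite A2" using un by (metis finite_Un finite_set_mset)+
    have "(\<Sum>t\<in>set_mset \<Lambda>. if small t then G1 n t else G2 n t)
       = (\<Sum>t\<in>A1. if small t then G1 n t else G2 n t) + (\<Sum>t\<in>A2. if small t then G1 n t else G2 n t)"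
      unfolding un by (rule sum.union_disjoint[OF f1 dj])
    also have "(\<Sum>t\<in>A1. if small t then G1 n t else G2 n t) = (\<Sum>t\<in>A1. G1 n t)"
      by (rule sum.cong) (auto simp: A1_def small_def)
    also have "(\<Sum>t\<in>A2. if small t then G1 n t else G2 n t) = (\<Sum>t\<in>A2. G2 n t)"
      by (rule sum.cong) (use assms(1) in \<open>auto simp: A2_def small_def\<close>)
    finally show ?thesis by simp
  qed
  have D: "W n t (tadd (a, b, c) t) - (if small t then G1 n t else G2 n t)
      = (if small t then 0 else W n t (tadd (a, b, c) t) - W n t (Dl t))" if t: "t \<in># \<Lambda>" for n t
  proof -
    obtain i j k where tt: "t = (i, j, k)" by (cases t) auto
    have td: "tadd (a, b, c) t = (a + i, b + j, c + k)" by (simp add: tt tadd_def)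
    show ?thesis
    proof (cases "small t")
      case True
      have "W n t (a + i, b + j, c + k) = of_nat (count \<Lambda> (a + i, b + j, c + k) + 1) * (\<Sum>g\<in>Fs n (add_mset (a + i, b + j, c + k) (\<Lambda> - {#t#})). monom_of n g)"
        unfolding W_def by (rule core) (use z d0 t tt in auto)
      also have "\<dots> = G1 n t"
      proof -
        have "(a + i, b + j, c + k) \<noteq> (0,0,0)" using d0 by auto
        then have "(0,0,0) \<notin># add_mset (a + i, b + j, c + k) (\<Lambda> - {#(i, j, k)#})" by (rule nz)
        then have ms: "mono_sym n (add_mset (a + i, b + j, c + k) (\<Lambda> - {#(i, j, k)#})) = (\<Sum>g\<in>Fs n (add_mset (a + i, b + j, c + k) (\<Lambda> - {#(i, j, k)#})). monom_of n g)"
          by (rule mono_sym_Fs)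
        show ?thesis unfolding G1_def tt prod.case ms ..
      qed
      finally show ?thesis using True td by simp
    next
      case False
      have "W n t (a + i + 1, b + j + 1, c + k - r) = of_nat (count \<Lambda> (a + i + 1, b + j + 1, c + k - r) + 1) * (\<Sum>g\<in>Fs n (add_mset (a + i + 1, b + j + 1, c + k - r) (\<Lambda> - {#t#})). monom_of n g)"
        unfolding W_def by (rule core) (use z t tt in auto)
      also have "\<dots> = G2 n t"
      proof -
        have "(a + i + 1, b + j + 1, c + k - r) \<noteq> (0,0,0)" by auto
        then have "(0,0,0) \<notin># add_mset (a + i + 1, b + j + 1, c + k - r) (\<Lambda> - {#(i, j, k)#})" by (rule nz)
        then have ms: "mono_sym n (add_mset (a + i + 1, b + j + 1, c + k - r) (\<Lambda> - {#(i, j, k)#})) = (\<Sum>g\<in>Fs n (add_mset (a + i + 1, b + j + 1, c + k - r) (\<Lambda> - {#(i, j, k)#})). monom_of n g)"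
          by (rule mono_sym_Fs)
        show ?thesis unfolding G2_def tt prod.case ms ..
      qed
      finally show ?thesis using False td by (simp add: Dl_def tt)
    qed
  qed
  show ?thesis
    unfolding eq_in_S_def
  proof (intro allI impI)
    fix n :: nat
    have "Pn n - (T0 n + (\<Sum>t\<in>A1. G1 n t) + (\<Sum>t\<in>A2. G2 n t))
        = (\<Sum>t\<in>set_mset \<Lambda>. W n t (tadd (a, b, c) t) - (if small t then G1 n t else G2 n t))"
      unfolding P4 add.assoc Q1 by (simp add: sum_subtractf)
    also have "\<dots> = (\<Sum>t\<in>set_mset \<Lambda>. if small t then 0 else W n t (tadd (a, b, c) t) - W n t (Dl t))"
      by (rule sum.cong[OF refl]) (simp add: D)
    finally have eq: "Pn n - (T0 n + (\<Sum>t\<in>A1. G1 n t) + (\<Sum>t\<in>A2. G2 n t))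
        = (\<Sum>t\<in>set_mset \<Lambda>. if small t then 0 else W n t (tadd (a, b, c) t) - W n t (Dl t))" .
    have mem: "(\<Sum>t\<in>set_mset \<Lambda>. if small t then 0 else W n t (tadd (a, b, c) t) - W n t (Dl t)) \<in> idealI r n"
    proof (rule ideal_sum[OF finite_set_mset])
      fix t assume "t \<in># \<Lambda>"
      obtain i j k where tt: "t = (i, j, k)" by (cases t) auto
      show "(if small t then 0 else W n t (tadd (a, b, c) t) - W n t (Dl t)) \<in> idealI r n"
      proof (cases "small t")
        case True then show ?thesis by (simp add: ideal_0)
      next
        case False
        then have "c + k \<ge> r" using assms(1) by (simp add: small_def tt)
        have nf: "\<not> small (i, j, k)" using False tt by simp
        show ?thesis unfolding tt if_not_P[OF nf] unfolding W_def Dl_def tadd_def prod.case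
          by (rule ideal_W) fact
      qed
    qed
    have sym: "sym_n n (\<Sum>t\<in>set_mset \<Lambda>. if small t then 0 else W n t (tadd (a, b, c) t) - W n t (Dl t))"
    proof (rule sym_sum_gen)
      fix t
      show "sym_n n (if small t then 0 else W n t (tadd (a, b, c) t) - W n t (Dl t))"
        unfolding W_def by (simp add: sym_zero sym_diff sym_W')
    qed
    show "(\<lambda>n. mono_sym n {#(a, b, c)#} * mono_sym n \<Lambda>) n -
       (\<lambda>n. of_nat (count \<Lambda> (a, b, c) + 1) * mono_sym n (add_mset (a, b, c) \<Lambda>) +
         (\<Sum>t \<in> {(i, j, k). (i, j, k) \<in># \<Lambda> \<and> c + k \<le> r - 1}.
            (case t of (i, j, k) \<Rightarrow>
              of_nat (count \<Lambda> (a + i, b + j, c + k) + 1)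
                * mono_sym n (add_mset (a + i, b + j, c + k) (\<Lambda> - {#(i, j, k)#})))) +
         (\<Sum>t \<in> {(i, j, k). (i, j, k) \<in># \<Lambda> \<and> c + k \<ge> r}.
            (case t of (i, j, k) \<Rightarrow>
              of_nat (count \<Lambda> (a + i + 1, b + j + 1, c + k - r) + 1)
                * mono_sym n (add_mset (a + i + 1, b + j + 1, c + k - r) (\<Lambda> - {#(i, j, k)#}))))) n
       \<in> idealI_sym r n"
      unfolding idealI_sym_def using eq mem sym
      unfolding Pn_def T0_def A1_def A2_def G1_def G2_def by simp
  qed
qed

end
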